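(* Let $\Lambda$ be a consistent normal modal logic, let $M\subseteq\{\Diamond,\Box\}$, and let $C$ be a Boolean clone. (1) If $\Lambda$ is of Type A, then $\mathsf{Clos}^\Lambda_M(C)=C$. (2) If $\Lambda$ is of Type B, then $\mathsf{Clos}^\Lambda_M(C)$ equals $C$ if $M=\emptyset$, $C\sqcup\{\bot\}$ if $M=\{\Diamond\}$, $C\sqcup\{\top\}$ if $M=\{\Box\}$, and $C\sqcup\{\top,\bot\}$ if $M=\{\Diamond,\Box\}$. (3) If $\Lambda$ is of Type C, then $C\subseteq\mathsf{Clos}^\Lambda_M(C)\subseteq D$, where $D$ is $C$ if $M=\emptyset$, $C\sqcup\{\bot\}$ if $M=\{\Diamond\}$, $C\sqcup\{\top\}$ if $M=\{\Box\}$, and $C\sqcup\{\top,\bot\}$ if $M=\{\Diamond,\Box\}$.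
   Context: Modal formulas: $\phi::=x\mid\neg\phi\mid\phi\land\psi\mid\phi\lor\psi\mid\Diamond\phi\mid\Box\phi$. A normal modal logic is a set of modal formulas containing all propositional tautologies, the K axiom and $\Diamond\phi\leftrightarrow\neg\Box\neg\phi$, closed under modus ponens, uniform substitution and necessitation; $\Lambda\vdash\phi$ means $\phi\in\Lambda$. $F_\circ$ ($F_\bullet$) is the one-world frame with a reflexive (irreflexive) world. $\Lambda$ is of Type A if $F_\circ\models\Lambda$; of Type B if $F_\bullet\models\Lambda$ and $\Lambda\vdash\Box^n\bot$ for some $n\ge1$; of Type C if $F_\bullet\models\Lambda$, $\Lambda\not\vdash\Box^n\bot$ for all $n\ge1$, and $\Lambda\vdash\bigvee_{k\le n}\Diamond^k\Box\bot$ for some $n\ge1$. A Boolean function is a map $\{0,1\}^n\to\{0,1\}$ with $n\ge1$ (constants $\top,\bot$ are constant unary functions); a Boolean clone is a set of Boolean functions containing all projections and closed under composition; for sets $C,X$ of Boolean functions, $C\sqcup X$ is the Boolean clone generated by $C\cup X$. For each Boolean function $f$ fix a propositional formula $\phi_f$ defining it. For a set $\Phi$ of modal formulas, $\mathrm{ML}_\Phi$ is the smallest set containing all variables and containing $\oplus_\phi(\psi_1,\dots,\psi_n)$ whenever $\phi(x_1,\dots,x_n)\in\Phi$ and $\psi_i\in\mathrm{ML}_\Phi$; such a formula is identified with the ordinary modal formula obtained by recursively substituting $\psi_i$ for $x_i$ in $\phi$. $\mathrm{ML}_{M\cup O}$ denotes $\mathrm{ML}_\Phi$ where $\Phi$ consists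 of $\Diamond x$ (if $\Diamond\in M$), $\Box x$ (if $\Box\in M$) and $\phi_f$ for $f\in O$. $\mathsf{Clos}^\Lambda_M(O)$ is the set of Boolean functions $f$ such that $\Lambda\vdash\phi_f\leftrightarrow\phi$ for some $\phi\in\mathrm{ML}_{M\cup O}$. *)

theory Defs
  imports Main
begin

datatype fm = Var nat | Neg fm | Conj fm fm | Disj fm fm | Dia fm | Box fm

definition Imp :: "fm \<Rightarrow> fm \<Rightarrow> fm" where "Imp a b = Disj (Neg a) b"
definition Iff :: "fm \<Rightarrow> fm \<Rightarrow> fm" where "Iff a b = Conj (Imp a b) (Imp b a)"
definition Bot :: fm where "Bot = Conj (Var 0) (Neg (Var 0))"

fun subst :: "(nat \<Rightarrow> fm) \<Rightarrow> fm \<Rightarrow> fm" where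
  "subst s (Var n) = s n"
| "subst s (Neg a) = Neg (subst s a)"
| "subst s (Conj a b) = Conj (subst s a) (subst s b)"
| "subst s (Disj a b) = Disj (subst s a) (subst s b)"
| "subst s (Dia a) = Dia (subst s a)"
| "subst s (Box a) = Box (subst s a)"

fun vars :: "fm \<Rightarrow> nat set" where
  "vars (Var n) = {n}"
| "vars (Neg a) = vars a"
| "vars (Conj a b) = vars a \<union> vars b"
| "vars (Disj a b) = vars a \<union> vars b"
| "vars (Dia a) = vars a"
| "vars (Box a) = vars a"

fun modal_free :: "fm \<Rightarrow> bool" where
  "modal_free (Var n) = True"
| "modal_free (Neg a) = modal_free a"
| "modal_free (Conj a b) = (modal_free a \<and> modal_free b)"
| "modal_free (Disj a b) = (modal_free a \<and> modal_free b)"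
| "modal_free (Dia a) = False"
| "modal_free (Box a) = False"

text \<open>Propositional evaluation (only meaningful on modal-free formulas).\<close>
fun pval :: "(nat \<Rightarrow> bool) \<Rightarrow> fm \<Rightarrow> bool" where
  "pval v (Var n) = v n"
| "pval v (Neg a) = (\<not> pval v a)"
| "pval v (Conj a b) = (pval v a \<and> pval v b)"
| "pval v (Disj a b) = (pval v a \<or> pval v b)"
| "pval v (Dia a) = False"
| "pval v (Box a) = False"

definition ptaut :: "fm \<Rightarrow> bool" where
  "ptaut a \<longleftrightarrow> modal_free a \<and> (\<forall>v. pval v a)"

fun boxn :: "nat \<Rightarrow> fm \<Rightarrow> fm" where
  "boxn 0 a = a" | "boxn (Suc n) a = Box (boxn n a)"

fun dian :: "nat \<Rightarrow> fm \<Rightarrow> fm" where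
  "dian 0 a = a" | "dian (Suc n) a = Dia (dian n a)"

fun dis_dia_box_bot :: "nat \<Rightarrow> fm" where
  "dis_dia_box_bot 0 = Box Bot"
| "dis_dia_box_bot (Suc n) = Disj (dis_dia_box_bot n) (dian (Suc n) (Box Bot))"

definition normal_logic :: "fm set \<Rightarrow> bool" where
  "normal_logic L \<longleftrightarrow>
     (\<forall>a. ptaut a \<longrightarrow> a \<in> L)
   \<and> (\<forall>a b. Imp (Box (Imp a b)) (Imp (Box a) (Box b)) \<in> L)
   \<and> (\<forall>a. Iff (Dia a) (Neg (Box (Neg a))) \<in> L)
   \<and> (\<forall>a b. a \<in> L \<longrightarrow> Imp a b \<in> L \<longrightarrow> b \<in> L)
   \<and> (\<forall>a s. a \<in> L \<longrightarrow> subst s a \<in> L)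
   \<and> (\<forall>a. a \<in> L \<longrightarrow> Box a \<in> L)"

definition consistent :: "fm set \<Rightarrow> bool" where
  "consistent L \<longleftrightarrow> Bot \<notin> L"

fun sat :: "('w \<Rightarrow> 'w \<Rightarrow> bool) \<Rightarrow> (nat \<Rightarrow> 'w \<Rightarrow> bool) \<Rightarrow> 'w \<Rightarrow> fm \<Rightarrow> bool" where
  "sat R V w (Var n) = V n w"
| "sat R V w (Neg a) = (\<not> sat R V w a)"
| "sat R V w (Conj a b) = (sat R V w a \<and> sat R V w b)"
| "sat R V w (Disj a b) = (sat R V w a \<or> sat R V w b)"
| "sat R V w (Dia a) = (\<exists>u. R w u \<and> sat R V u a)"
| "sat R V w (Box a) = (\<forall>u. R w u \<longrightarrow> sat R V u a)"

definition frame_validates :: "('w \<Rightarrow> 'w \<Rightarrow> bool) \<Rightarrow> fm set \<Rightarrow> bool" where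
  "frame_validates R L \<longleftrightarrow> (\<forall>a\<in>L. \<forall>V w. sat R V w a)"

definition F_refl :: "unit \<Rightarrow> unit \<Rightarrow> bool" where "F_refl = (\<lambda>_ _. True)"
definition F_irr :: "unit \<Rightarrow> unit \<Rightarrow> bool" where "F_irr = (\<lambda>_ _. False)"

definition typeA :: "fm set \<Rightarrow> bool" where
  "typeA L \<longleftrightarrow> frame_validates F_refl L"

definition typeB :: "fm set \<Rightarrow> bool" where
  "typeB L \<longleftrightarrow> frame_validates F_irr L \<and> (\<exists>n\<ge>1. boxn n Bot \<in> L)"

definition typeC :: "fm set \<Rightarrow> bool" where
  "typeC L \<longleftrightarrow> frame_validates F_irr L \<and> (\<forall>n\<ge>1. boxn n Bot \<notin> L)
      \<and> (\<exists>n\<ge>1. dis_dia_box_bot n \<in> L)"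

text \<open>A Boolean function of arity n is encoded as (n, f) where f is the function on
  lists of length n, normalised to False on lists of other lengths.\<close>
type_synonym bfun = "nat \<times> (bool list \<Rightarrow> bool)"

definition is_bfun :: "bfun \<Rightarrow> bool" where
  "is_bfun F \<longleftrightarrow> fst F \<ge> 1 \<and> (\<forall>xs. length xs \<noteq> fst F \<longrightarrow> snd F xs = False)"

definition bproj :: "nat \<Rightarrow> nat \<Rightarrow> bfun" where
  "bproj n i = (n, \<lambda>xs. length xs = n \<and> xs ! i)"

definition bcomp :: "bfun \<Rightarrow> bfun list \<Rightarrow> nat \<Rightarrow> bfun" where
  "bcomp F gs m = (m, \<lambda>xs. length xs = m \<and> snd F (map (\<lambda>g. snd g xs) gs))"

definition clone :: "bfun set \<Rightarrow> bool" where
  "clone C \<longleftrightarrow> C \<subseteq> Collect is_bfun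
    \<and> (\<forall>n i. 1 \<le> n \<and> i < n \<longrightarrow> bproj n i \<in> C)
    \<and> (\<forall>F gs m. F \<in> C \<and> length gs = fst F \<and> m \<ge> 1 \<and> (\<forall>g\<in>set gs. g \<in> C \<and> fst g = m)
                 \<longrightarrow> bcomp F gs m \<in> C)"

definition gen_clone :: "bfun set \<Rightarrow> bfun set" where
  "gen_clone X = \<Inter>{D. clone D \<and> X \<subseteq> D}"

definition clone_join :: "bfun set \<Rightarrow> bfun set \<Rightarrow> bfun set" (infixl "\<squnion>\<^sub>c" 65) where
  "C \<squnion>\<^sub>c X = gen_clone (C \<union> X)"

definition btop :: bfun where "btop = (1, \<lambda>xs. length xs = 1)"
definition bbot :: bfun where "bbot = (1, \<lambda>xs. False)"

text \<open>A choice of defining formulas: phi F is a propositional formula in the variables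
  Var 0, ..., Var (n-1) (standing for x_1, ..., x_n) defining F.\<close>
definition defining_choice :: "(bfun \<Rightarrow> fm) \<Rightarrow> bool" where
  "defining_choice phi \<longleftrightarrow> (\<forall>F. is_bfun F \<longrightarrow>
      modal_free (phi F) \<and> vars (phi F) \<subseteq> {..<fst F}
      \<and> (\<forall>v. pval v (phi F) = snd F (map v [0..<fst F])))"

datatype mop = MDia | MBox

inductive_set MLf :: "mop set \<Rightarrow> bfun set \<Rightarrow> (bfun \<Rightarrow> fm) \<Rightarrow> fm set"
  for M Ops phi where
  var: "Var i \<in> MLf M Ops phi"
| dia: "MDia \<in> M \<Longrightarrow> a \<in> MLf M Ops phi \<Longrightarrow> Dia a \<in> MLf M Ops phi"
| box: "MBox \<in> M \<Longrightarrow> a \<in> MLf M Ops phi \<Longrightarrow> Box a \<in> MLf M Ops phi"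
| op: "F \<in> Ops \<Longrightarrow> length as = fst F \<Longrightarrow> (\<forall>a\<in>set as. a \<in> MLf M Ops phi) \<Longrightarrow>
        subst (\<lambda>i. if i < fst F then as ! i else Var i) (phi F) \<in> MLf M Ops phi"

definition Clos :: "fm set \<Rightarrow> (bfun \<Rightarrow> fm) \<Rightarrow> mop set \<Rightarrow> bfun set \<Rightarrow> bfun set" where
  "Clos L phi M Ops = {F. is_bfun F \<and> (\<exists>a\<in>MLf M Ops phi. Iff (phi F) a \<in> L)}"

end

theory Submission
  imports Defs "HOL-Library.Countable"
begin


instance fm :: countable by countable_datatype

fun tval :: "(fm \<Rightarrow> bool) \<Rightarrow> fm \<Rightarrow> bool" where
  "tval v (Var n) = v (Var n)"
| "tval v (Neg a) = (\<not> tval v a)"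
| "tval v (Conj a b) = (tval v a \<and> tval v b)"
| "tval v (Disj a b) = (tval v a \<or> tval v b)"
| "tval v (Dia a) = v (Dia a)"
| "tval v (Box a) = v (Box a)"

fun skel :: "fm \<Rightarrow> fm" where
  "skel (Var n) = Var (to_nat (Var n))"
| "skel (Neg a) = Neg (skel a)"
| "skel (Conj a b) = Conj (skel a) (skel b)"
| "skel (Disj a b) = Disj (skel a) (skel b)"
| "skel (Dia a) = Var (to_nat (Dia a))"
| "skel (Box a) = Var (to_nat (Box a))"

lemma skel_mf: "modal_free (skel a)" by (induction a) auto
lemma skel_subst: "subst from_nat (skel a) = a" by (induction a) auto
lemma skel_pval: "pval v (skel a) = tval (\<lambda>b. v (to_nat b)) a" by (induction a) auto

lemma tval_Imp[simp]: "tval v (Imp a b) = (tval v a \<longrightarrow> tval v b)" by (simp add: Imp_def)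
lemma tval_Iff[simp]: "tval v (Iff a b) = (tval v a = tval v b)" by (auto simp add: Iff_def)
lemma tval_Bot[simp]: "tval v Bot = False" by (simp add: Bot_def)

lemma nl:
  assumes "normal_logic L"
  shows "\<And>a. ptaut a \<Longrightarrow> a \<in> L"
    "\<And>a b. Imp (Box (Imp a b)) (Imp (Box a) (Box b)) \<in> L"
    "\<And>a. Iff (Dia a) (Neg (Box (Neg a))) \<in> L"
    "\<And>a b. a \<in> L \<Longrightarrow> Imp a b \<in> L \<Longrightarrow> b \<in> L"
    "\<And>a s. a \<in> L \<Longrightarrow> subst s a \<in> L"
    "\<And>a. a \<in> L \<Longrightarrow> Box a \<in> L"
proof -
  have h: "(\<forall>a. ptaut a \<longrightarrow> a \<in> L)
   \<and> (\<forall>a b. Imp (Box (Imp a b)) (Imp (Box a) (Box b)) \<in> L)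
   \<and> (\<forall>a. Iff (Dia a) (Neg (Box (Neg a))) \<in> L)
   \<and> (\<forall>a b. a \<in> L \<longrightarrow> Imp a b \<in> L \<longrightarrow> b \<in> L)
   \<and> (\<forall>a s. a \<in> L \<longrightarrow> subst s a \<in> L)
   \<and> (\<forall>a. a \<in> L \<longrightarrow> Box a \<in> L)" using assms unfolding normal_logic_def by assumption
  note h1 = h[THEN conjunct1] and h2 = h[THEN conjunct2, THEN conjunct1]
    and h3 = h[THEN conjunct2, THEN conjunct2, THEN conjunct1]
    and h4 = h[THEN conjunct2, THEN conjunct2, THEN conjunct2, THEN conjunct1]
    and h5 = h[THEN conjunct2, THEN conjunct2, THEN conjunct2, THEN conjunct2, THEN conjunct1]
    and h6 = h[THEN conjunct2, THEN conjunct2, THEN conjunct2, THEN conjunct2, THEN conjunct2]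
  show "\<And>a. ptaut a \<Longrightarrow> a \<in> L" by (rule h1[rule_format])
  show "\<And>a b. Imp (Box (Imp a b)) (Imp (Box a) (Box b)) \<in> L" by (rule h2[rule_format])
  show "\<And>a. Iff (Dia a) (Neg (Box (Neg a))) \<in> L" by (rule h3[rule_format])
  show "\<And>a b. a \<in> L \<Longrightarrow> Imp a b \<in> L \<Longrightarrow> b \<in> L" by (rule h4[rule_format])
  show "\<And>a s. a \<in> L \<Longrightarrow> subst s a \<in> L" by (rule h5[rule_format])
  show "\<And>a. a \<in> L \<Longrightarrow> Box a \<in> L" by (rule h6[rule_format])
qed

lemma taut: assumes "normal_logic L" "\<And>v. tval v a" shows "a \<in> L"
proof -
  have "ptaut (skel a)" using assms(2) by (simp add: ptaut_def skel_mf skel_pval)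
  hence "skel a \<in> L" by (rule nl(1)[OF assms(1)])
  hence "subst from_nat (skel a) \<in> L" by (rule nl(5)[OF assms(1)])
  thus ?thesis by (simp add: skel_subst)
qed

lemma Lmp: "normal_logic L \<Longrightarrow> a \<in> L \<Longrightarrow> Imp a b \<in> L \<Longrightarrow> b \<in> L"
  by (rule nl(4))

lemma prop1: assumes "normal_logic L" "a \<in> L" "\<And>v. tval v a \<Longrightarrow> tval v b" shows "b \<in> L"
proof -
  have "Imp a b \<in> L" by (rule taut[OF assms(1)]) (simp add: assms(3))
  thus ?thesis by (rule Lmp[OF assms(1,2)])
qed

lemma prop2: assumes "normal_logic L" "a1 \<in> L" "a2 \<in> L"
  "\<And>v. tval v a1 \<Longrightarrow> tval v a2 \<Longrightarrow> tval v b" shows "b \<in> L"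
proof -
  have h: "Imp a1 (Imp a2 b) \<in> L" by (rule taut[OF assms(1)]) (simp add: assms(4))
  have "Imp a2 b \<in> L" by (rule Lmp[OF assms(1,2) h])
  thus ?thesis by (rule Lmp[OF assms(1,3)])
qed

lemma prop3: assumes "normal_logic L" "a1 \<in> L" "a2 \<in> L" "a3 \<in> L"
  "\<And>v. tval v a1 \<Longrightarrow> tval v a2 \<Longrightarrow> tval v a3 \<Longrightarrow> tval v b" shows "b \<in> L"
proof -
  have h: "Imp a1 (Imp a2 (Imp a3 b)) \<in> L" by (rule taut[OF assms(1)]) (simp add: assms(5))
  have "Imp a2 (Imp a3 b) \<in> L" by (rule Lmp[OF assms(1,2) h])
  hence "Imp a3 b \<in> L" by (rule Lmp[OF assms(1,3)])
  thus ?thesis by (rule Lmp[OF assms(1,4)])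
qed

lemma box_imp: assumes "normal_logic L" "Imp a b \<in> L" shows "Imp (Box a) (Box b) \<in> L"
proof -
  have "Box (Imp a b) \<in> L" by (rule nl(6)[OF assms])
  moreover have "Imp (Box (Imp a b)) (Imp (Box a) (Box b)) \<in> L" by (rule nl(2)[OF assms(1)])
  ultimately show ?thesis by (rule Lmp[OF assms(1)])
qed

lemma box_cong: assumes "normal_logic L" "Iff a b \<in> L" shows "Iff (Box a) (Box b) \<in> L"
proof -
  have "Imp a b \<in> L" by (rule prop1[OF assms(1,2)]) simp
  moreover have "Imp b a \<in> L" by (rule prop1[OF assms(1,2)]) auto
  ultimately have A: "Imp (Box a) (Box b) \<in> L" and B: "Imp (Box b) (Box a) \<in> L" using assms(1) box_imp by auto
  show ?thesis by (rule prop2[OF assms(1) A B]) auto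
qed

lemma dia_ax: "normal_logic L \<Longrightarrow> Iff (Dia a) (Neg (Box (Neg a))) \<in> L"
  by (rule nl(3))

lemma dia_cong: assumes "normal_logic L" "Iff a b \<in> L" shows "Iff (Dia a) (Dia b) \<in> L"
proof -
  have "Iff (Neg a) (Neg b) \<in> L" by (rule prop1[OF assms(1,2)]) simp
  hence A: "Iff (Box (Neg a)) (Box (Neg b)) \<in> L" using assms box_cong by auto
  show ?thesis by (rule prop3[OF assms(1) A dia_ax[OF assms(1), of a] dia_ax[OF assms(1), of b]]) auto
qed

lemma subst_cong: assumes "normal_logic L" "\<And>i. Iff (s i) (t i) \<in> L"
  shows "Iff (subst s b) (subst t b) \<in> L"
proof (induction b)
  case (Var x) then show ?case using assms by simp
next
  case (Neg b) show ?case by (simp, rule prop1[OF assms(1) Neg.IH]) simp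
next
  case (Conj b1 b2) show ?case by (simp, rule prop2[OF assms(1) Conj.IH]) auto
next
  case (Disj b1 b2) show ?case by (simp, rule prop2[OF assms(1) Disj.IH]) auto
next
  case (Dia b) then show ?case using assms(1) dia_cong by auto
next
  case (Box b) then show ?case using assms(1) box_cong by auto
qed

lemma L_subst: "normal_logic L \<Longrightarrow> a \<in> L \<Longrightarrow> subst s a \<in> L"
  by (rule nl(5))

lemma subst_Iff[simp]: "subst s (Iff a b) = Iff (subst s a) (subst s b)"
  by (simp add: Iff_def Imp_def)

lemma tval_mf: "modal_free b \<Longrightarrow> tval v b = pval (\<lambda>i. v (Var i)) b"
  by (induction b) auto

lemma tval_subst_mf: "modal_free b \<Longrightarrow> tval v (subst t b) = pval (\<lambda>i. tval v (t i)) b"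
  by (induction b) auto

lemma subst_vars_cong: "(\<And>i. i \<in> vars b \<Longrightarrow> s i = t i) \<Longrightarrow> subst s b = subst t b"
  by (induction b) auto

lemma subst_subst: "subst s (subst t b) = subst (\<lambda>i. subst s (t i)) b"
  by (induction b) auto

lemma subst_Var: "subst Var b = b"
  by (induction b) auto

lemma sat_subst: "sat R V w (subst s b) = sat R (\<lambda>i w. sat R V w (s i)) w b"
  by (induction b arbitrary: w) auto

lemma sat_pval: "modal_free b \<Longrightarrow> sat R V w b = pval (\<lambda>i. V i w) b"
  by (induction b) auto

lemma sat_Iff[simp]: "sat R V w (Iff a b) = (sat R V w a = sat R V w b)"
  by (auto simp: Iff_def Imp_def)



lemma dc: assumes "defining_choice phi" "is_bfun F"
  shows "modal_free (phi F)" "vars (phi F) \<subseteq> {..<fst F}" "pval v (phi F) = snd F (map v [0..<fst F])"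
proof -
  have h: "\<forall>F. is_bfun F \<longrightarrow> modal_free (phi F) \<and> vars (phi F) \<subseteq> {..<fst F} \<and> (\<forall>v. pval v (phi F) = snd F (map v [0..<fst F]))"
    using assms(1) unfolding defining_choice_def by assumption
  have "modal_free (phi F) \<and> vars (phi F) \<subseteq> {..<fst F} \<and> (\<forall>v. pval v (phi F) = snd F (map v [0..<fst F]))"
    using h assms(2) by (intro mp[OF spec[OF h]])
  thus "modal_free (phi F)" "vars (phi F) \<subseteq> {..<fst F}" "pval v (phi F) = snd F (map v [0..<fst F])"
    by auto
qed

lemma MLf_subst:
  assumes "a \<in> MLf M Ops phi" "\<And>i. s i \<in> MLf M Ops phi" "defining_choice phi" "Ops \<subseteq> Collect is_bfun"
  shows "subst s a \<in> MLf M Ops phi"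
  using assms(1)
proof (induction a rule: MLf.induct)
  case (var i) then show ?case using assms(2) by simp
next
  case (dia a) then show ?case by (simp add: MLf.dia)
next
  case (box a) then show ?case by (simp add: MLf.box)
next
  case (op F as)
  have bf: "is_bfun F" using op(1) assms(4) by blast
  have vs: "vars (phi F) \<subseteq> {..<fst F}" by (rule dc(2)[OF assms(3) bf])
  have e: "subst s (subst (\<lambda>i. if i < fst F then as ! i else Var i) (phi F))
      = subst (\<lambda>i. if i < fst F then map (subst s) as ! i else Var i) (phi F)"
    unfolding subst_subst
  proof (rule subst_vars_cong)
    fix i assume "i \<in> vars (phi F)"
    hence "i < fst F" using vs by auto
    thus "subst s (if i < fst F then as ! i else Var i) = (if i < fst F then map (subst s) as ! i else Var i)"
      using op(2) by simp
  qed
  have l: "length (map (subst s) as) = fst F" using op(2) by simp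
  have m: "\<forall>a\<in>set (map (subst s) as). a \<in> MLf M Ops phi" using op(3) by auto
  show ?case unfolding e by (rule MLf.op[OF op(1) l m])
qed
lemma clone_proj: "clone D \<Longrightarrow> 1 \<le> n \<Longrightarrow> i < n \<Longrightarrow> bproj n i \<in> D"
  unfolding clone_def by blast

lemma clone_comp: "clone D \<Longrightarrow> F \<in> D \<Longrightarrow> length gs = fst F \<Longrightarrow> m \<ge> 1 \<Longrightarrow>
   (\<forall>g\<in>set gs. g \<in> D \<and> fst g = m) \<Longrightarrow> bcomp F gs m \<in> D"
  unfolding clone_def by blast

definition extv :: "bool list \<Rightarrow> nat \<Rightarrow> bool" where
  "extv xs i = xs ! (if i < length xs then i else 0)"

definition fun_of :: "(unit \<Rightarrow> unit \<Rightarrow> bool) \<Rightarrow> nat \<Rightarrow> fm \<Rightarrow> bfun" where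
  "fun_of R n a = (n, \<lambda>xs. length xs = n \<and> sat R (\<lambda>i _. extv xs i) () a)"

lemma map_nth_f: "map (\<lambda>i. f (xs ! i)) [0..<length xs] = map f xs"
  by (rule nth_equalityI) auto

lemma sem:
  assumes "clone D" "C \<subseteq> D" "defining_choice phi" "C \<subseteq> Collect is_bfun"
    "\<not> R () () \<and> MDia \<in> M \<longrightarrow> bbot \<in> D" "\<not> R () () \<and> MBox \<in> M \<longrightarrow> btop \<in> D"
    "a \<in> MLf M C phi"
  shows "\<forall>n\<ge>1. fun_of R n a \<in> D"
  using assms(7)
proof (induction a rule: MLf.induct)
  case (var i)
  show ?case
  proof (intro allI impI)
    fix n :: nat assume n: "n \<ge> 1"
    have "fun_of R n (Var i) = bproj n (if i < n then i else 0)"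
      unfolding fun_of_def bproj_def extv_def by (auto intro!: ext)
    thus "fun_of R n (Var i) \<in> D" using clone_proj[OF assms(1) n, of "if i < n then i else 0"] n by auto
  qed
next
  case (dia a)
  show ?case
  proof (intro allI impI)
    fix n :: nat assume n: "n \<ge> 1"
    show "fun_of R n (Dia a) \<in> D"
    proof (cases "R () ()")
      case True
      hence "fun_of R n (Dia a) = fun_of R n a" unfolding fun_of_def by auto
      thus ?thesis using dia n by simp
    next
      case False
      hence "fun_of R n (Dia a) = bcomp bbot [bproj n 0] n"
        unfolding fun_of_def bcomp_def bbot_def by (auto intro!: ext)
      moreover have "bproj n 0 \<in> D" using clone_proj[OF assms(1) n, of 0] n by simp
      moreover have "bbot \<in> D" using False dia assms(5) by auto
      ultimately show ?thesis using clone_comp[OF assms(1), of bbot "[bproj n 0]" n] n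
        by (simp add: bbot_def bproj_def)
    qed
  qed
next
  case (box a)
  show ?case
  proof (intro allI impI)
    fix n :: nat assume n: "n \<ge> 1"
    show "fun_of R n (Box a) \<in> D"
    proof (cases "R () ()")
      case True
      hence "fun_of R n (Box a) = fun_of R n a" unfolding fun_of_def by auto
      thus ?thesis using box n by simp
    next
      case False
      hence "fun_of R n (Box a) = bcomp btop [bproj n 0] n"
        unfolding fun_of_def bcomp_def btop_def by (auto intro!: ext)
      moreover have "bproj n 0 \<in> D" using clone_proj[OF assms(1) n, of 0] n by simp
      moreover have "btop \<in> D" using False box assms(6) by auto
      ultimately show ?thesis using clone_comp[OF assms(1), of btop "[bproj n 0]" n] n
        by (simp add: btop_def bproj_def)
    qed
  qed
next
  case (op F as)
  have bf: "is_bfun F" using op(1) assms(4) by blast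
  have vs: "\<And>v. pval v (phi F) = snd F (map v [0..<fst F])" and mf: "modal_free (phi F)"
    using dc[OF assms(3) bf] by auto
  show ?case
  proof (intro allI impI)
    fix n :: nat assume n: "n \<ge> 1"
    have key: "sat R (\<lambda>i _. extv xs i) () (subst (\<lambda>i. if i < fst F then as ! i else Var i) (phi F))
         = snd F (map (\<lambda>x. sat R (\<lambda>i _. extv xs i) () x) as)" for xs
    proof -
        have "sat R (\<lambda>i _. extv xs i) () (subst (\<lambda>i. if i < fst F then as ! i else Var i) (phi F))
           = snd F (map (\<lambda>i. sat R (\<lambda>i _. extv xs i) () (if i < fst F then as ! i else Var i)) [0..<fst F])"
          by (simp add: sat_subst sat_pval[OF mf] vs)
        also have "map (\<lambda>i. sat R (\<lambda>i _. extv xs i) () (if i < fst F then as ! i else Var i)) [0..<fst F]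
            = map (\<lambda>i. sat R (\<lambda>i _. extv xs i) () (as ! i)) [0..<length as]"
          using op(2) by auto
        also have "\<dots> = map (\<lambda>x. sat R (\<lambda>i _. extv xs i) () x) as" by (rule map_nth_f)
        finally show ?thesis .
    qed
    have "fun_of R n (subst (\<lambda>i. if i < fst F then as ! i else Var i) (phi F))
        = bcomp F (map (fun_of R n) as) n"
      unfolding fun_of_def bcomp_def using key by (auto intro!: ext simp: comp_def)
    also have "\<dots> \<in> D"
      apply (rule clone_comp[OF assms(1)])
      using op(1,2,3) assms(2) n by (auto simp: fun_of_def)
    finally show "fun_of R n (subst (\<lambda>i. if i < fst F then as ! i else Var i) (phi F)) \<in> D" .
  qed
qed


lemma bfun_eqI: "is_bfun F \<Longrightarrow> fst G = fst F \<Longrightarrow> (\<And>xs. length xs = fst F \<Longrightarrow> snd F xs = snd G xs)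
  \<Longrightarrow> (\<And>xs. length xs \<noteq> fst F \<Longrightarrow> \<not> snd G xs) \<Longrightarrow> F = G"
  unfolding is_bfun_def by (cases F, cases G) (auto intro!: ext)

lemma Clos_sub:
  assumes "clone D" "C \<subseteq> D" "defining_choice phi" "C \<subseteq> Collect is_bfun"
    "\<not> R () () \<and> MDia \<in> M \<longrightarrow> bbot \<in> D" "\<not> R () () \<and> MBox \<in> M \<longrightarrow> btop \<in> D"
    "frame_validates R L"
  shows "Clos L phi M C \<subseteq> D"
proof
  fix F assume "F \<in> Clos L phi M C"
  then obtain a where bf: "is_bfun F" and a: "a \<in> MLf M C phi" and iff: "Iff (phi F) a \<in> L"
    unfolding Clos_def by blast
  have n: "fst F \<ge> 1" using bf unfolding is_bfun_def by simp
  have "fun_of R (fst F) a \<in> D" using sem[where R=R and M=M, OF assms(1-6) a] n by blast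
  moreover have "F = fun_of R (fst F) a"
  proof (rule bfun_eqI[OF bf])
    show "fst (fun_of R (fst F) a) = fst F" by (simp add: fun_of_def)
  next
    fix xs :: "bool list" assume l: "length xs = fst F"
    have "sat R (\<lambda>i _. extv xs i) () (Iff (phi F) a)"
      using assms(7) iff unfolding frame_validates_def by blast
    hence "sat R (\<lambda>i _. extv xs i) () (phi F) = sat R (\<lambda>i _. extv xs i) () a" by simp
    moreover have "sat R (\<lambda>i _. extv xs i) () (phi F) = snd F (map (extv xs) [0..<fst F])"
      by (simp add: sat_pval[OF dc(1)[OF assms(3) bf]] dc(3)[OF assms(3) bf])
    moreover have "map (extv xs) [0..<fst F] = xs"
      using l by (intro nth_equalityI) (auto simp: extv_def)
    ultimately show "snd F xs = snd (fun_of R (fst F) a) xs" using l by (simp add: fun_of_def)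
  next
    fix xs :: "bool list" assume "length xs \<noteq> fst F"
    thus "\<not> snd (fun_of R (fst F) a) xs" by (simp add: fun_of_def)
  qed
  ultimately show "F \<in> D" by simp
qed

lemma phi_taut:
  assumes "defining_choice phi" "is_bfun F"
  shows "tval v (phi F) = snd F (map (\<lambda>i. v (Var i)) [0..<fst F])"
  by (simp add: tval_mf[OF dc(1)[OF assms]] dc(3)[OF assms])

lemma C_sub_Clos:
  assumes "normal_logic L" "clone C" "defining_choice phi"
  shows "C \<subseteq> Clos L phi M C"
proof
  fix F assume F: "F \<in> C"
  have bf: "is_bfun F" using F assms(2) unfolding clone_def by blast
  have e: "subst (\<lambda>i. if i < fst F then map Var [0..<fst F] ! i else Var i) (phi F) = phi F"
  proof -
    have "subst (\<lambda>i. if i < fst F then map Var [0..<fst F] ! i else Var i) (phi F) = subst Var (phi F)"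
      by (rule subst_vars_cong) auto
    thus ?thesis by (simp add: subst_Var)
  qed
  have "subst (\<lambda>i. if i < fst F then map Var [0..<fst F] ! i else Var i) (phi F) \<in> MLf M C phi"
    by (rule MLf.op[OF F]) (auto intro: MLf.var)
  hence m: "phi F \<in> MLf M C phi" using e by simp
  have "Iff (phi F) (phi F) \<in> L" by (rule taut[OF assms(1)]) simp
  thus "F \<in> Clos L phi M C" using m bf unfolding Clos_def by blast
qed

lemma Clos_clone:
  assumes "normal_logic L" "clone C" "defining_choice phi"
  shows "clone (Clos L phi M C)"
  unfolding clone_def
proof (intro conjI allI impI)
  show "Clos L phi M C \<subseteq> Collect is_bfun" unfolding Clos_def by blast
next
  fix n i :: nat assume ni: "1 \<le> n \<and> i < n"
  have bf: "is_bfun (bproj n i)" using ni unfolding is_bfun_def bproj_def by auto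
  have "Iff (phi (bproj n i)) (Var i) \<in> L"
    by (rule taut[OF assms(1)]) (simp add: phi_taut[OF assms(3) bf], simp add: bproj_def ni)
  thus "bproj n i \<in> Clos L phi M C" using bf unfolding Clos_def by (blast intro: MLf.var)
next
  fix F gs m
  assume h: "F \<in> Clos L phi M C \<and> length gs = fst F \<and> 1 \<le> m \<and>
             (\<forall>g\<in>set gs. g \<in> Clos L phi M C \<and> fst g = m)"
  obtain aF where bfF: "is_bfun F" and aF: "aF \<in> MLf M C phi" and iffF: "Iff (phi F) aF \<in> L"
    using h unfolding Clos_def by blast
  have "\<forall>g\<in>set gs. \<exists>a. is_bfun g \<and> a \<in> MLf M C phi \<and> Iff (phi g) a \<in> L"
    using h unfolding Clos_def by blast
  then obtain A where A: "\<And>g. g \<in> set gs \<Longrightarrow> is_bfun g \<and> A g \<in> MLf M C phi \<and> Iff (phi g) (A g) \<in> L"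
    by metis
  have fg: "\<And>g. g \<in> set gs \<Longrightarrow> fst g = m" using h by blast
  define s where "s i = (if i < length gs then A (gs ! i) else Var 0)" for i
  define t where "t i = (if i < length gs then phi (gs ! i) else Var 0)" for i
  have bfc: "is_bfun (bcomp F gs m)" using h unfolding is_bfun_def bcomp_def by auto
  have Cb: "C \<subseteq> Collect is_bfun" using assms(2) unfolding clone_def by blast
  have sm: "subst s aF \<in> MLf M C phi"
    by (rule MLf_subst[OF aF _ assms(3) Cb]) (auto simp: s_def A intro: MLf.var)
  have 1: "Iff (phi (bcomp F gs m)) (subst t (phi F)) \<in> L"
  proof (rule taut[OF assms(1)])
    fix v
    have "tval v (subst t (phi F)) = snd F (map (\<lambda>i. tval v (t i)) [0..<fst F])"
      by (simp add: tval_subst_mf[OF dc(1)[OF assms(3) bfF]] dc(3)[OF assms(3) bfF])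
    also have "map (\<lambda>i. tval v (t i)) [0..<fst F] = map (\<lambda>i. tval v (phi (gs ! i))) [0..<length gs]"
      using h by (auto simp: t_def)
    also have "\<dots> = map (\<lambda>g. tval v (phi g)) gs" by (rule map_nth_f)
    also have "\<dots> = map (\<lambda>g. snd g (map (\<lambda>i. v (Var i)) [0..<m])) gs"
      using A fg phi_taut[OF assms(3)] by (auto intro!: map_cong)
    finally have "tval v (subst t (phi F)) = snd F (map (\<lambda>g. snd g (map (\<lambda>i. v (Var i)) [0..<m])) gs)" .
    moreover have "tval v (phi (bcomp F gs m)) = snd (bcomp F gs m) (map (\<lambda>i. v (Var i)) [0..<m])"
      using phi_taut[OF assms(3) bfc] by (simp add: bcomp_def)
    ultimately show "tval v (Iff (phi (bcomp F gs m)) (subst t (phi F)))"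
      by (simp add: bcomp_def)
  qed
  have 2: "Iff (subst t (phi F)) (subst t aF) \<in> L"
    using L_subst[OF assms(1) iffF, of t] by simp
  have 3: "Iff (subst t aF) (subst s aF) \<in> L"
  proof (rule subst_cong[OF assms(1)])
    fix i
    show "Iff (t i) (s i) \<in> L"
    proof (cases "i < length gs")
      case True then show ?thesis using A[of "gs ! i"] by (simp add: s_def t_def)
    next
      case False then show ?thesis by (simp add: s_def t_def) (rule taut[OF assms(1)], simp)
    qed
  qed
  have "Iff (phi (bcomp F gs m)) (subst s aF) \<in> L"
    by (rule prop3[OF assms(1) 1 2 3]) auto
  thus "bcomp F gs m \<in> Clos L phi M C" using bfc sm unfolding Clos_def by blast
qed

lemma box_mono_n: assumes "normal_logic L" "Imp a b \<in> L" shows "Imp (boxn k a) (boxn k b) \<in> L"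
proof (induction k)
  case 0 show ?case using assms(2) by simp
next
  case (Suc k) show ?case using box_imp[OF assms(1) Suc] by simp
qed

lemma boxn_all: assumes "normal_logic L" "boxn n Bot \<in> L" shows "boxn n b \<in> L"
proof -
  have "Imp Bot b \<in> L" by (rule taut[OF assms(1)]) simp
  hence "Imp (boxn n Bot) (boxn n b) \<in> L" by (rule box_mono_n[OF assms(1)])
  thus ?thesis by (rule Lmp[OF assms(1,2)])
qed

lemma dian_eq: assumes "normal_logic L" shows "Iff (dian n a) (Neg (boxn n (Neg a))) \<in> L"
proof (induction n)
  case 0 show ?case by (simp, rule taut[OF assms]) simp
next
  case (Suc k)
  have "Iff (Neg (dian k a)) (boxn k (Neg a)) \<in> L" by (rule prop1[OF assms Suc]) auto
  hence B: "Iff (Box (Neg (dian k a))) (Box (boxn k (Neg a))) \<in> L" by (rule box_cong[OF assms])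
  show ?case by (simp, rule prop2[OF assms B dia_ax[OF assms]]) auto
qed

lemma dian_MLf: "MDia \<in> M \<Longrightarrow> dian n (Var 0) \<in> MLf M Ops phi"
  by (induction n) (auto intro: MLf.var MLf.dia)

lemma boxn_MLf: "MBox \<in> M \<Longrightarrow> boxn n (Var 0) \<in> MLf M Ops phi"
  by (induction n) (auto intro: MLf.var MLf.box)

lemma bbot_Clos:
  assumes "normal_logic L" "defining_choice phi" "boxn n Bot \<in> L" "MDia \<in> M"
  shows "bbot \<in> Clos L phi M C"
proof -
  have bf: "is_bfun bbot" unfolding is_bfun_def bbot_def by simp
  have b1: "boxn n (Neg (Var 0)) \<in> L" by (rule boxn_all[OF assms(1,3)])
  have "Iff (phi bbot) (dian n (Var 0)) \<in> L"
    by (rule prop2[OF assms(1) b1 dian_eq[OF assms(1), of n "Var 0"]]) (simp add: phi_taut[OF assms(2) bf], simp add: bbot_def)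
  thus ?thesis using bf dian_MLf[OF assms(4)] unfolding Clos_def by blast
qed

lemma btop_Clos:
  assumes "normal_logic L" "defining_choice phi" "boxn n Bot \<in> L" "MBox \<in> M"
  shows "btop \<in> Clos L phi M C"
proof -
  have bf: "is_bfun btop" unfolding is_bfun_def btop_def by simp
  have b1: "boxn n (Var 0) \<in> L" by (rule boxn_all[OF assms(1,3)])
  have "Iff (phi btop) (boxn n (Var 0)) \<in> L"
    by (rule prop1[OF assms(1) b1]) (simp add: phi_taut[OF assms(2) bf], simp add: btop_def)
  thus ?thesis using bf boxn_MLf[OF assms(4)] unfolding Clos_def by blast
qed

lemma gen_le: "clone D \<Longrightarrow> X \<subseteq> D \<Longrightarrow> gen_clone X \<subseteq> D"
  unfolding gen_clone_def by blast

lemma le_gen: "(\<And>D. clone D \<Longrightarrow> X \<subseteq> D \<Longrightarrow> Y \<subseteq> D) \<Longrightarrow> Y \<subseteq> gen_clone X"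
  unfolding gen_clone_def by blast



lemma up_gen:
  assumes "clone C" "defining_choice phi" "frame_validates F_irr L"
    "MDia \<in> M \<longrightarrow> bbot \<in> X" "MBox \<in> M \<longrightarrow> btop \<in> X"
  shows "Clos L phi M C \<subseteq> C \<squnion>\<^sub>c X"
  unfolding clone_join_def
proof (rule le_gen)
  fix D assume D: "clone D" "C \<union> X \<subseteq> D"
  have Cb: "C \<subseteq> Collect is_bfun" using assms(1) unfolding clone_def by blast
  show "Clos L phi M C \<subseteq> D"
    by (rule Clos_sub[OF D(1) _ assms(2) Cb _ _ assms(3)]) (use D assms(4,5) in auto)
qed

lemma up_empty:
  assumes "clone C" "defining_choice phi" "frame_validates F_irr L" "M = {}"
  shows "Clos L phi M C \<subseteq> C"
proof -
  have Cb: "C \<subseteq> Collect is_bfun" using assms(1) unfolding clone_def by blast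
  show ?thesis by (rule Clos_sub[OF assms(1) subset_refl assms(2) Cb _ _ assms(3)]) (use assms(4) in auto)
qed

lemma low_gen:
  assumes "normal_logic L" "clone C" "defining_choice phi" "boxn n Bot \<in> L"
    "bbot \<in> X \<longrightarrow> MDia \<in> M" "btop \<in> X \<longrightarrow> MBox \<in> M" "X \<subseteq> {bbot, btop}"
  shows "C \<squnion>\<^sub>c X \<subseteq> Clos L phi M C"
  unfolding clone_join_def
proof (rule gen_le[OF Clos_clone[OF assms(1-3)]])
  show "C \<union> X \<subseteq> Clos L phi M C"
  proof
    fix F assume "F \<in> C \<union> X"
    then consider "F \<in> C" | "F = bbot" "bbot \<in> X" | "F = btop" "btop \<in> X" using assms(7) by blast
    then show "F \<in> Clos L phi M C"
    proof cases
      case 1 then show ?thesis using C_sub_Clos[OF assms(1-3)] by blast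
    next
      case 2 then show ?thesis using bbot_Clos[OF assms(1,3,4)] assms(5) by blast
    next
      case 3 then show ?thesis using btop_Clos[OF assms(1,3,4)] assms(6) by blast
    qed
  qed
qed

lemma bt_ne: "btop \<noteq> bbot"
proof
  assume "btop = bbot"
  hence "snd btop [True] = snd bbot [True]" by simp
  thus False by (simp add: btop_def bbot_def)
qed

theorem theorem4p15:
  fixes L :: "fm set" and M :: "mop set" and C :: "bfun set" and phi :: "bfun \<Rightarrow> fm"
  assumes "normal_logic L" and "consistent L"
    and "clone C"
    and "defining_choice phi"
  shows "(typeA L \<longrightarrow> Clos L phi M C = C)
   \<and> (typeB L \<longrightarrow>
        (M = {} \<longrightarrow> Clos L phi M C = C)
      \<and> (M = {MDia} \<longrightarrow> Clos L phi M C = C \<squnion>\<^sub>c {bbot})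
      \<and> (M = {MBox} \<longrightarrow> Clos L phi M C = C \<squnion>\<^sub>c {btop})
      \<and> (M = {MDia, MBox} \<longrightarrow> Clos L phi M C = C \<squnion>\<^sub>c {btop, bbot}))
   \<and> (typeC L \<longrightarrow> C \<subseteq> Clos L phi M C \<and>
        (M = {} \<longrightarrow> Clos L phi M C \<subseteq> C)
      \<and> (M = {MDia} \<longrightarrow> Clos L phi M C \<subseteq> C \<squnion>\<^sub>c {bbot})
      \<and> (M = {MBox} \<longrightarrow> Clos L phi M C \<subseteq> C \<squnion>\<^sub>c {btop})
      \<and> (M = {MDia, MBox} \<longrightarrow> Clos L phi M C \<subseteq> C \<squnion>\<^sub>c {btop, bbot}))"
proof (intro conjI impI)
  have Cb: "C \<subseteq> Collect is_bfun" using assms(3) unfolding clone_def by blast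
  have CC: "C \<subseteq> Clos L phi M C" by (rule C_sub_Clos[OF assms(1,3,4)])
  have u1: "Clos L phi M C \<subseteq> C" if fv: "frame_validates F_irr L" and m: "M = {}"
    by (rule up_empty[OF assms(3,4) fv m])
  have u2: "Clos L phi M C \<subseteq> C \<squnion>\<^sub>c {bbot}" if fv: "frame_validates F_irr L" and m: "M = {MDia}"
    by (rule up_gen[OF assms(3,4) fv]) (simp_all add: m)
  have u3: "Clos L phi M C \<subseteq> C \<squnion>\<^sub>c {btop}" if fv: "frame_validates F_irr L" and m: "M = {MBox}"
    by (rule up_gen[OF assms(3,4) fv]) (simp_all add: m)
  have u4: "Clos L phi M C \<subseteq> C \<squnion>\<^sub>c {btop, bbot}" if fv: "frame_validates F_irr L" and m: "M = {MDia, MBox}"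
    by (rule up_gen[OF assms(3,4) fv]) (simp_all add: m)
  {
    assume "typeA L"
    hence fv: "frame_validates F_refl L" by (simp add: typeA_def)
    have "Clos L phi M C \<subseteq> C"
      by (rule Clos_sub[OF assms(3) subset_refl assms(4) Cb _ _ fv]) (simp_all add: F_refl_def)
    thus "Clos L phi M C = C" using CC by (rule subset_antisym)
  }
  {
    assume tB: "typeB L"
    hence fv: "frame_validates F_irr L" by (simp add: typeB_def)
    from tB obtain n where n: "boxn n Bot \<in> L" unfolding typeB_def by blast
    show "Clos L phi M C = C" if m: "M = {}"
      using u1[OF fv m] CC by (rule subset_antisym)
    show "Clos L phi M C = C \<squnion>\<^sub>c {bbot}" if m: "M = {MDia}"
    proof (rule subset_antisym)
      show "Clos L phi M C \<subseteq> C \<squnion>\<^sub>c {bbot}" by (rule u2[OF fv m])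
      show "C \<squnion>\<^sub>c {bbot} \<subseteq> Clos L phi M C"
        by (rule low_gen[OF assms(1,3,4) n]) (simp_all add: m bt_ne)
    qed
    show "Clos L phi M C = C \<squnion>\<^sub>c {btop}" if m: "M = {MBox}"
    proof (rule subset_antisym)
      show "Clos L phi M C \<subseteq> C \<squnion>\<^sub>c {btop}" by (rule u3[OF fv m])
      show "C \<squnion>\<^sub>c {btop} \<subseteq> Clos L phi M C"
        by (rule low_gen[OF assms(1,3,4) n]) (simp_all add: m bt_ne[symmetric])
    qed
    show "Clos L phi M C = C \<squnion>\<^sub>c {btop, bbot}" if m: "M = {MDia, MBox}"
    proof (rule subset_antisym)
      show "Clos L phi M C \<subseteq> C \<squnion>\<^sub>c {btop, bbot}" by (rule u4[OF fv m])
      show "C \<squnion>\<^sub>c {btop, bbot} \<subseteq> Clos L phi M C"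
        by (rule low_gen[OF assms(1,3,4) n]) (simp_all add: m)
    qed
  }
  {
    assume tC: "typeC L"
    hence fv: "frame_validates F_irr L" by (simp add: typeC_def)
    show "C \<subseteq> Clos L phi M C" by (rule CC)
    show "Clos L phi M C \<subseteq> C" if m: "M = {}" by (rule u1[OF fv m])
    show "Clos L phi M C \<subseteq> C \<squnion>\<^sub>c {bbot}" if m: "M = {MDia}" by (rule u2[OF fv m])
    show "Clos L phi M C \<subseteq> C \<squnion>\<^sub>c {btop}" if m: "M = {MBox}" by (rule u3[OF fv m])
    show "Clos L phi M C \<subseteq> C \<squnion>\<^sub>c {btop, bbot}" if m: "M = {MDia, MBox}" by (rule u4[OF fv m])
  }
qed

end
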